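(* Let $\mathbf V$ be a monoid variety such that the one-letter word $t$ is an isoterm for $\mathbf V$ and $\mathbf V$ satisfies $xtx\approx xtx^2$. If $\mathbb M_\gamma(a^+t)\not\subseteq\mathbf V$, then $\mathbf V$ satisfies $xtxs\approx xtxsx$.
   Context: Words are elements of the free monoid $\mathfrak A^*$ over a countably infinite alphabet. A word $\mathbf w$ is an isoterm for $\mathbf V$ if $\mathbf V$ satisfies no identity $\mathbf w\approx\mathbf w'$ with $\mathbf w'\ne\mathbf w$. Let $\tau_1$ be the congruence on $\mathfrak A^*$ generated by $a=aa$ for all letters $a$; $\mathbf u\,\gamma\,\mathbf v$ iff $\mathbf u\,\tau_1\,\mathbf v$ and $\mathbf u,\mathbf v$ have the same set of letters occurring at least twice. For $\gamma$-classes write $\mathtt v\le\mathtt u$ iff $\mathtt u=\mathtt p\mathtt v\mathtt s$ in $\mathfrak A^*/\gamma$. For a set $\mathtt W$ of $\gamma$-classes, $M_\gamma(\mathtt W)$ is the Rees quotient of $\mathfrak A^*/\gamma$ by the ideal of classes not $\le$ any element of $\mathtt W$, and $\mathbb M_\gamma(\mathtt W)$ is the monoid variety it generates. Here $a^+t$ denotes the $\gamma$-class $\{a^kt:k\ge2\}$. *)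

theory Defs
  imports Main
begin

type_synonym word = "nat list"

definition subst :: "(nat \<Rightarrow> word) \<Rightarrow> word \<Rightarrow> word" where
  "subst \<sigma> u = concat (map \<sigma> u)"

text \<open>A monoid variety is represented by its equational theory (Birkhoff):
  a fully invariant congruence on the free monoid. V satisfies u \<approx> v iff (u,v) \<in> E.\<close>
definition equational_theory :: "(word \<times> word) set \<Rightarrow> bool" where
  "equational_theory E \<longleftrightarrow> equiv UNIV E
     \<and> (\<forall>u v p s. (u, v) \<in> E \<longrightarrow> (p @ u @ s, p @ v @ s) \<in> E)
     \<and> (\<forall>u v \<sigma>. (u, v) \<in> E \<longrightarrow> (subst \<sigma> u, subst \<sigma> v) \<in> E)"

definition isoterm :: "(word \<times> word) set \<Rightarrow> word \<Rightarrow> bool" where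
  "isoterm E w \<longleftrightarrow> (\<forall>w'. (w, w') \<in> E \<longrightarrow> w' = w)"

inductive tau1 :: "word \<Rightarrow> word \<Rightarrow> bool" where
  tau1_refl: "tau1 u u"
| tau1_sym: "tau1 u v \<Longrightarrow> tau1 v u"
| tau1_trans: "tau1 u v \<Longrightarrow> tau1 v w \<Longrightarrow> tau1 u w"
| tau1_step: "tau1 (p @ [a] @ s) (p @ [a, a] @ s)"

definition mult_letters :: "word \<Rightarrow> nat set" where
  "mult_letters u = {a. count_list u a \<ge> 2}"

definition gamma :: "word \<Rightarrow> word \<Rightarrow> bool" where
  "gamma u v \<longleftrightarrow> tau1 u v \<and> mult_letters u = mult_letters v"

definition gclass :: "word \<Rightarrow> word set" where
  "gclass u = {v. gamma u v}"

text \<open>gamma-class of v is \<le> gamma-class of u: u = p v s in the quotient.\<close>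
definition gle :: "word \<Rightarrow> word \<Rightarrow> bool" where
  "gle v u \<longleftrightarrow> (\<exists>p s. gamma u (p @ v @ s))"

text \<open>The monoid M_gamma(W), W given by a set of representatives of gamma-classes.
  Elements: None is the zero (the collapsed ideal); Some X for a gamma-class X
  below some element of W.\<close>
definition Mg_carrier :: "word set \<Rightarrow> word set option set" where
  "Mg_carrier W = {None} \<union> {Some (gclass u) | u. \<exists>w\<in>W. gle u w}"

definition Mg_mult :: "word set \<Rightarrow> word set option \<Rightarrow> word set option \<Rightarrow> word set option" where
  "Mg_mult W X Y = (case (X, Y) of
      (Some A, Some B) \<Rightarrow>
        (if \<exists>x\<in>A. \<exists>y\<in>B. \<exists>w\<in>W. gle (x @ y) w
         then Some {z. \<exists>x\<in>A. \<exists>y\<in>B. gamma (x @ y) z} else None)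
    | _ \<Rightarrow> None)"

definition Mg_eval :: "word set \<Rightarrow> (nat \<Rightarrow> word set option) \<Rightarrow> word \<Rightarrow> word set option" where
  "Mg_eval W f u = foldr (\<lambda>a acc. Mg_mult W (f a) acc) u (Some (gclass []))"

definition Mg_satisfies :: "word set \<Rightarrow> word \<Rightarrow> word \<Rightarrow> bool" where
  "Mg_satisfies W u v \<longleftrightarrow>
     (\<forall>f. (\<forall>x. f x \<in> Mg_carrier W) \<longrightarrow> Mg_eval W f u = Mg_eval W f v)"

text \<open>The variety generated by M_gamma(W) is contained in the variety with
  equational theory E iff M_gamma(W) satisfies every identity of E.\<close>
definition Mg_in_variety :: "word set \<Rightarrow> (word \<times> word) set \<Rightarrow> bool" where
  "Mg_in_variety W E \<longleftrightarrow> (\<forall>(u, v) \<in> E. Mg_satisfies W u v)"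

end

theory Submission
  imports Defs
begin

lemma tau1_ctx: "tau1 u v \<Longrightarrow> tau1 (p @ u @ s) (p @ v @ s)"
proof (induction rule: tau1.induct)
  case (tau1_refl u) then show ?case by (rule tau1.tau1_refl)
next
  case (tau1_sym u v) then show ?case by (metis tau1.tau1_sym)
next
  case (tau1_trans u v w) then show ?case by (metis tau1.tau1_trans)
next
  case (tau1_step q a r)
  from tau1.tau1_step[of "p @ q" a "r @ s"] show ?case by simp
qed

lemma tau1_app: "tau1 x x' \<Longrightarrow> tau1 y y' \<Longrightarrow> tau1 (x @ y) (x' @ y')"
  using tau1_ctx[of x x' "[]" y] tau1_ctx[of y y' x' "[]"] tau1_trans by auto

lemma tau1_set: "tau1 u v \<Longrightarrow> set u = set v"
  by (induction rule: tau1.induct) auto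

lemma tau1_rda: "tau1 u v \<Longrightarrow> remdups_adj u = remdups_adj v"
proof (induction rule: tau1.induct)
  case (tau1_step p a s)
  have "remdups_adj (p @ a # a # s) = remdups_adj (p @ [a]) @ tl (remdups_adj (a # a # s))"
    by (rule remdups_adj_append)
  also have "\<dots> = remdups_adj (p @ [a]) @ tl (remdups_adj (a # s))" by simp
  also have "\<dots> = remdups_adj (p @ a # s)" by (rule remdups_adj_append[symmetric])
  finally show ?case by simp
qed auto

lemma in_set_count: "(a \<in> set x) = (count_list x a \<ge> 1)"
  using count_list_0_iff[of x a] by auto

lemma mult_app: "mult_letters (x @ y) = mult_letters x \<union> mult_letters y \<union> (set x \<inter> set y)"
  unfolding mult_letters_def by (auto simp: in_set_count)

lemma gamma_refl: "gamma u u" by (simp add: gamma_def tau1_refl)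
lemma gamma_sym: "gamma u v \<Longrightarrow> gamma v u" by (auto simp: gamma_def intro: tau1_sym)
lemma gamma_trans: "gamma u v \<Longrightarrow> gamma v w \<Longrightarrow> gamma u w"
  by (auto simp: gamma_def intro: tau1_trans)
lemma gamma_app: "gamma x x' \<Longrightarrow> gamma y y' \<Longrightarrow> gamma (x @ y) (x' @ y')"
proof -
  assume a: "gamma x x'" "gamma y y'"
  then have t: "tau1 x x'" "tau1 y y'" and m: "mult_letters x = mult_letters x'" "mult_letters y = mult_letters y'"
    by (simp_all add: gamma_def)
  have "set x = set x'" "set y = set y'" using t tau1_set by blast+
  then have "mult_letters (x @ y) = mult_letters (x' @ y')" using m by (simp add: mult_app)
  then show ?thesis using tau1_app[OF t] by (simp add: gamma_def)
qed

lemma gle_gamma: "gamma v v' \<Longrightarrow> gle v w \<Longrightarrow> gle v' w"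
  unfolding gle_def
proof (elim exE)
  fix p s assume "gamma v v'" "gamma w (p @ v @ s)"
  then have "gamma w (p @ v' @ s)"
    using gamma_app[OF gamma_refl[of p] gamma_app[OF \<open>gamma v v'\<close> gamma_refl[of s]]] gamma_trans
    by blast
  then show "\<exists>p s. gamma w (p @ v' @ s)" by blast
qed

lemma gle_factor: "gle (x @ y) w \<Longrightarrow> gle x w \<and> gle y w"
  unfolding gle_def by (metis append.assoc)

lemma gle_nil: "gle [] w"
  unfolding gle_def using gamma_refl[of w] by (metis append.right_neutral append_Nil)

lemma gclass_eq: "gamma u v \<Longrightarrow> gclass u = gclass v"
  unfolding gclass_def using gamma_sym gamma_trans by blast

lemma gclass_eqD: "gclass u = gclass v \<Longrightarrow> gamma u v"
  unfolding gclass_def using gamma_refl by blast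

lemma rep_all: "set xs \<subseteq> {a} \<Longrightarrow> xs = replicate (length xs) a"
  by (metis replicate_length_same singletonD subsetD)

lemma Zform:
  assumes "gamma [0,0,1] Z"
  shows "Z = replicate (length Z - 1) 0 @ [1] \<and> length Z \<ge> 3"
proof -
  have "tau1 [0,0,1] Z" using assms by (simp add: gamma_def)
  then have "remdups_adj [0,0,1] = remdups_adj Z" by (rule tau1_rda)
  then have rd: "remdups_adj Z = [0,1]" by simp
  have "mult_letters [0,0,1] = {0}" unfolding mult_letters_def by (auto split: if_splits)
  then have ml: "mult_letters Z = {0}"
    using assms by (auto simp: gamma_def)
  have sZ: "set Z = {0,1}" using remdups_adj_set[of Z] rd by simp
  have lZ: "last Z = 1" using last_remdups_adj[of Z] rd by simp
  have "(1::nat) \<notin> mult_letters Z" using ml by simp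
  then have c1: "count_list Z 1 \<le> 1" unfolding mult_letters_def by simp
  have "(0::nat) \<in> mult_letters Z" using ml by simp
  then have c0: "count_list Z 0 \<ge> 2" unfolding mult_letters_def by simp
  have "Z \<noteq> []"
  proof
    assume "Z = []"
    then have "set Z = {}" by simp
    then show False using sZ by simp
  qed
  then have "butlast Z @ [last Z] = Z" by (rule append_butlast_last_id)
  then have Y: "Z = butlast Z @ [1]" unfolding lZ by (rule sym)
  define Y where "Y = butlast Z"
  have Y: "Z = Y @ [1]" using Y unfolding Y_def .
  have "count_list Y 1 = 0" using c1 Y by (metis add_le_same_cancel2 count_list_append
    count_list.simps le_zero_eq add_0)
  then have "1 \<notin> set Y" by (simp add: count_list_0_iff)
  then have "set Y \<subseteq> {0}" using sZ Y by auto
  then have Yr0: "Y = replicate (length Y) 0" by (rule rep_all)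
  obtain k where Yr: "Y = replicate k 0" by (rule that[OF Yr0])
  have "count_list Y 0 \<ge> 2" using c0 Y by simp
  then have "length Y \<ge> 2" using count_le_length[of Y 0] by simp
  then have "k \<ge> 2" using Yr by simp
  then show ?thesis using Y Yr by simp
qed

lemma fac:
  assumes "p @ U @ s = replicate i (0::nat) @ [1]"
  shows "(\<exists>m. U = replicate m 0) \<or> (\<exists>m. U = replicate m 0 @ [1])"
proof (cases s rule: rev_cases)
  case Nil
  show ?thesis
  proof (cases U rule: rev_cases)
    case Nil then show ?thesis by auto
  next
    case (snoc U' c)
    have "(p @ U') @ [c] = replicate i 0 @ [1]" using assms snoc \<open>s = []\<close> by simp
    then have "p @ U' = replicate i 0" "c = 1" by (simp_all only: append1_eq_conv)
    then have "set (p @ U') \<subseteq> {0}" by (cases i) auto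
    then have "set U' \<subseteq> {0}" by auto
    then have "U' = replicate (length U') 0" by (rule rep_all)
    then show ?thesis using snoc \<open>c = 1\<close> by metis
  qed
next
  case (snoc s' c)
  have "(p @ U @ s') @ [c] = replicate i 0 @ [1]" using assms snoc by simp
  then have "p @ U @ s' = replicate i 0" by (simp only: append1_eq_conv)
  then have "set U \<subseteq> {0}"
  proof -
    have "set (p @ U @ s') \<subseteq> {0}" using \<open>p @ U @ s' = replicate i 0\<close> by (cases i) auto
    then show ?thesis by auto
  qed
  then have "U = replicate (length U) 0" by (rule rep_all)
  then show ?thesis by blast
qed

lemma gle_form: "gle U [0,0,1] \<Longrightarrow> (\<exists>m. U = replicate m 0) \<or> (\<exists>m. U = replicate m 0 @ [1])"
proof -
  assume "gle U [0,0,1]"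
  then obtain p s where "gamma [0,0,1] (p @ U @ s)" unfolding gle_def by blast
  then have "p @ U @ s = replicate (length (p @ U @ s) - 1) 0 @ [1]" using Zform by blast
  then show ?thesis by (rule fac)
qed

lemma not_gle_bad: "\<not> gle [1,0] [0,0,1]"
proof
  assume "gle [1,0] [0,0,1]"
  then have "(\<exists>m. [1::nat,0] = replicate m 0) \<or> (\<exists>m. [1::nat,0] = replicate m 0 @ [1])"
    by (rule gle_form)
  then show False
  proof
    assume "\<exists>m. [1::nat,0] = replicate m 0"
    then obtain m where "[1::nat,0] = replicate m 0" by blast
    then have "1 \<in> set (replicate m (0::nat))" by (metis list.set_intros(1))
    then show False by simp
  next
    assume "\<exists>m. [1::nat,0] = replicate m 0 @ [1]"
    then obtain m where "[1::nat,0] = replicate m 0 @ [1]" by blast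
    then have "last [1::nat,0] = 1" by simp
    then show False by simp
  qed
qed


lemma mult_some:
  assumes "gle y w0" "gle z w0"
  shows "Mg_mult {w0} (Some (gclass y)) (Some (gclass z)) =
         (if gle (y @ z) w0 then Some (gclass (y @ z)) else None)"
proof -
  have c: "(\<exists>x\<in>gclass y. \<exists>x'\<in>gclass z. \<exists>w\<in>{w0}. gle (x @ x') w) = gle (y @ z) w0"
  proof
    assume "\<exists>x\<in>gclass y. \<exists>x'\<in>gclass z. \<exists>w\<in>{w0}. gle (x @ x') w"
    then obtain x x' where "gamma y x" "gamma z x'" "gle (x @ x') w0"
      unfolding gclass_def by blast
    then show "gle (y @ z) w0" using gamma_app gamma_sym gle_gamma by blast
  next
    assume "gle (y @ z) w0"
    then show "\<exists>x\<in>gclass y. \<exists>x'\<in>gclass z. \<exists>w\<in>{w0}. gle (x @ x') w"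
      unfolding gclass_def using gamma_refl by blast
  qed
  have s: "{q. \<exists>x\<in>gclass y. \<exists>x'\<in>gclass z. gamma (x @ x') q} = gclass (y @ z)"
  proof
    show "{q. \<exists>x\<in>gclass y. \<exists>x'\<in>gclass z. gamma (x @ x') q} \<subseteq> gclass (y @ z)"
      unfolding gclass_def using gamma_app gamma_trans by blast
    show "gclass (y @ z) \<subseteq> {q. \<exists>x\<in>gclass y. \<exists>x'\<in>gclass z. gamma (x @ x') q}"
      unfolding gclass_def using gamma_refl by blast
  qed
  show ?thesis unfolding Mg_mult_def using c s by simp
qed

definition rep :: "(nat \<Rightarrow> word set option) \<Rightarrow> nat \<Rightarrow> word" where
  "rep f c = (case f c of None \<Rightarrow> [1,0] | Some X \<Rightarrow> (SOME y. X = gclass y \<and> gle y [0,0,1]))"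

lemma rep_some:
  assumes "f c \<in> Mg_carrier {[0,0,1]}" "f c \<noteq> None"
  shows "f c = Some (gclass (rep f c)) \<and> gle (rep f c) [0,0,1]"
proof -
  obtain u where u: "f c = Some (gclass u)" "gle u [0,0,1]"
    using assms unfolding Mg_carrier_def by auto
  then have "\<exists>y. gclass u = gclass y \<and> gle y [0,0,1]" by blast
  then have "gclass u = gclass (rep f c) \<and> gle (rep f c) [0,0,1]"
    unfolding rep_def using u by simp (rule someI_ex)
  then show ?thesis using u by simp
qed

lemma subst_Cons: "subst r (c # u) = r c @ subst r u" by (simp add: subst_def)

lemma eval_lemma:
  assumes "\<forall>c. f c \<in> Mg_carrier {[0,0,1]}"
  shows "Mg_eval {[0,0,1]} f u =
    (if gle (subst (rep f) u) [0,0,1] then Some (gclass (subst (rep f) u)) else None)"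
proof (induction u)
  case Nil
  then show ?case by (simp add: Mg_eval_def subst_def gle_nil)
next
  case (Cons c u)
  have ev: "Mg_eval {[0,0,1]} f (c # u) = Mg_mult {[0,0,1]} (f c) (Mg_eval {[0,0,1]} f u)"
    by (simp add: Mg_eval_def)
  show ?case
  proof (cases "f c")
    case None
    then have "rep f c = [1,0]" by (simp add: rep_def)
    then have "\<not> gle (subst (rep f) (c # u)) [0,0,1]"
      using not_gle_bad gle_factor by (metis subst_Cons)
    then show ?thesis using ev None by (simp add: Mg_mult_def)
  next
    case (Some X)
    have "f c \<in> Mg_carrier {[0,0,1]}" using assms by blast
    moreover have "f c \<noteq> None" using Some by simp
    ultimately have fc: "f c = Some (gclass (rep f c))" "gle (rep f c) [0,0,1]"
      using rep_some by blast+
    show ?thesis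
    proof (cases "gle (subst (rep f) u) [0,0,1]")
      case True
      then show ?thesis using ev fc Cons.IH mult_some[OF fc(2) True] by (simp add: subst_Cons)
    next
      case False
      then have "\<not> gle (subst (rep f) (c # u)) [0,0,1]"
        using gle_factor by (metis subst_Cons)
      then show ?thesis using ev fc Cons.IH False by (simp add: Mg_mult_def)
    qed
  qed
qed

lemma E_facts:
  assumes "equational_theory E"
  shows E_refl: "(u, u) \<in> E"
    and E_sym: "(u, v) \<in> E \<Longrightarrow> (v, u) \<in> E"
    and E_trans: "(u, v) \<in> E \<Longrightarrow> (v, w) \<in> E \<Longrightarrow> (u, w) \<in> E"
    and E_ctx: "(u, v) \<in> E \<Longrightarrow> (p @ u @ s, p @ v @ s) \<in> E"
    and E_subst: "(u, v) \<in> E \<Longrightarrow> (subst \<sigma> u, subst \<sigma> v) \<in> E"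
proof -
  have eq: "equiv UNIV E" using assms by (simp add: equational_theory_def)
  show "(u, u) \<in> E" using eq by (elim equivE) (simp add: refl_onD)
  show "(u, v) \<in> E \<Longrightarrow> (v, u) \<in> E" using eq by (elim equivE) (rule symD)
  show "(u, v) \<in> E \<Longrightarrow> (v, w) \<in> E \<Longrightarrow> (u, w) \<in> E" using eq by (elim equivE) (rule transD)
  show "(u, v) \<in> E \<Longrightarrow> (p @ u @ s, p @ v @ s) \<in> E" using assms by (simp add: equational_theory_def)
  show "(u, v) \<in> E \<Longrightarrow> (subst \<sigma> u, subst \<sigma> v) \<in> E" using assms by (simp add: equational_theory_def)
qed

lemma reduce:
  assumes E: "equational_theory E" and nv: "\<not> Mg_in_variety {[0, 0, 1]} E"
  shows "\<exists>U W. (U, W) \<in> E \<and> gle U [0,0,1] \<and> \<not> gamma U W"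
proof -
  obtain u v f where uv: "(u, v) \<in> E" and car: "\<forall>c. f c \<in> Mg_carrier {[0,0,1]}"
    and ne: "Mg_eval {[0,0,1]} f u \<noteq> Mg_eval {[0,0,1]} f v"
    using nv unfolding Mg_in_variety_def Mg_satisfies_def by blast
  define U where "U = subst (rep f) u"
  define W where "W = subst (rep f) v"
  have UW: "(U, W) \<in> E" unfolding U_def W_def using E_subst[OF E uv] .
  have ne2: "(if gle U [0,0,1] then Some (gclass U) else None) \<noteq>
             (if gle W [0,0,1] then Some (gclass W) else None)"
    using ne eval_lemma[OF car] unfolding U_def W_def by metis
  show ?thesis
  proof (cases "gle U [0,0,1]")
    case True
    have "\<not> gamma U W"
    proof
      assume g: "gamma U W"
      then have "gle W [0,0,1]" using True gle_gamma by blast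
      then show False using ne2 True gclass_eq[OF g] by simp
    qed
    then show ?thesis using UW True by blast
  next
    case False
    then have gW: "gle W [0,0,1]" using ne2 by (auto split: if_splits)
    have "\<not> gamma W U" using False gW gle_gamma by blast
    then show ?thesis using E_sym[OF E UW] gW by blast
  qed
qed


lemma subst_cnt: "subst (\<lambda>c. if P c then [1] else []) w = replicate (length (filter P w)) 1"
  by (induction w) (auto simp: subst_def)

lemma cnt_E:
  assumes "equational_theory E" "(U, W) \<in> E"
  shows "(replicate (length (filter P U)) 1, replicate (length (filter P W)) 1) \<in> E"
  using E_subst[OF assms, of "\<lambda>c. if P c then [1] else []"] by (simp add: subst_cnt)

lemma iso_app: "isoterm E w \<Longrightarrow> (w, w') \<in> E \<Longrightarrow> w' = w"
  unfolding isoterm_def by blast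

lemma iso_cnt:
  assumes E: "equational_theory E" and iso: "isoterm E [1]"
    and h: "(replicate m 1, replicate n 1) \<in> E" and m: "m \<le> 1"
  shows "m = n"
proof (cases m)
  case 0
  have "([1] @ replicate m 1 @ [], [1] @ replicate n 1 @ []) \<in> E" using E_ctx[OF E h] .
  then have "([1], 1 # replicate n 1) \<in> E" using 0 by simp
  then have "(1::nat) # replicate n 1 = [1]" by (rule iso_app[OF iso])
  then show ?thesis using 0 by (cases n) auto
next
  case (Suc k)
  then have "m = 1" using m by simp
  then have "([1], replicate n 1) \<in> E" using h by simp
  then have "replicate n (1::nat) = [1]" by (rule iso_app[OF iso])
  then have "length (replicate n (1::nat)) = 1" by simp
  then show ?thesis using \<open>m = 1\<close> by simp
qed

lemma iso_cnt2:
  assumes E: "equational_theory E" and iso: "isoterm E [1]"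
    and h: "(replicate m 1, replicate n 1) \<in> E" and "m \<le> 1 \<or> n \<le> 1"
  shows "m = n"
proof (cases "m \<le> 1")
  case True then show ?thesis by (rule iso_cnt[OF E iso h])
next
  case False
  then have "n \<le> 1" using assms(4) by simp
  then have "n = m" by (rule iso_cnt[OF E iso E_sym[OF E h]])
  then show ?thesis by simp
qed

lemma tau1_rep: "tau1 (p @ replicate (Suc k) a @ s) (p @ [a] @ s)"
proof (induction k)
  case 0 then show ?case by (simp add: tau1_refl)
next
  case (Suc k)
  have "tau1 ((p @ replicate k a) @ [a] @ s) ((p @ replicate k a) @ [a, a] @ s)"
    by (rule tau1_step)
  then have "tau1 (p @ replicate (Suc k) a @ s) (p @ replicate (Suc (Suc k)) a @ s)"
    by (simp add: replicate_app_Cons_same)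
  then show ?case using Suc tau1_sym tau1_trans by blast
qed

lemma count_rep: "count_list (replicate m x) a = (if a = x then m else 0)"
  by (induction m) auto

lemma gamma_rep:
  assumes "m \<ge> 2" "n \<ge> 2"
  shows "gamma (replicate m 0 @ s) (replicate n 0 @ s)"
proof -
  obtain m' n' where mn: "m = Suc m'" "n = Suc n'" using assms by (metis Suc_le_D numeral_2_eq_2)
  have "tau1 (replicate m 0 @ s) ([0] @ s)" using tau1_rep[of "[]" m' 0 s] mn by simp
  moreover have "tau1 (replicate n 0 @ s) ([0] @ s)" using tau1_rep[of "[]" n' 0 s] mn by simp
  ultimately have t: "tau1 (replicate m 0 @ s) (replicate n 0 @ s)" using tau1_sym tau1_trans by blast
  have "mult_letters (replicate m 0 @ s) = mult_letters (replicate n 0 @ s)"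
    unfolding mult_letters_def using assms by (auto simp: count_rep)
  then show ?thesis using t by (simp add: gamma_def)
qed

lemma concat_rep: "concat (replicate m [a]) = replicate m a"
  by (induction m) auto

lemma xtxn:
  assumes E: "equational_theory E" and H: "([0, 1, 0], [0, 1, 0, 0]) \<in> E"
  shows "([0] @ w @ [0], [0] @ w @ replicate (Suc n) 0) \<in> E"
proof (induction n)
  case 0 then show ?case using E_refl[OF E] by simp
next
  case (Suc n)
  have "(subst (\<lambda>c. if c = 1 then w else [c]) [0,1,0], subst (\<lambda>c. if c = 1 then w else [c]) [0,1,0,0]) \<in> E"
    by (rule E_subst[OF E H])
  then have b: "([0] @ w @ [0], [0] @ w @ [0,0]) \<in> E" by (simp add: subst_def)
  have "([] @ ([0] @ w @ [0]) @ replicate n 0, [] @ ([0] @ w @ [0,0]) @ replicate n 0) \<in> E"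
    by (rule E_ctx[OF E b])
  then have "([0] @ w @ replicate (Suc n) 0, [0] @ w @ replicate (Suc (Suc n)) 0) \<in> E"
    by simp
  then show ?case using Suc E_trans[OF E] by blast
qed

lemma caseA:
  assumes E: "equational_theory E" and H: "([0, 1, 0], [0, 1, 0, 0]) \<in> E"
    and C: "([0, 1], [1, 0]) \<in> E"
  shows "([0, 1, 0, 2], [0, 1, 0, 2, 0]) \<in> E"
proof -
  have "([] @ ([0] @ [1] @ [0]) @ [2], [] @ ([0] @ [1] @ replicate (Suc 1) 0) @ [2]) \<in> E"
    by (rule E_ctx[OF E xtxn[OF E H]])
  then have s1: "([0,1,0,2], [0,1,0,0,2]) \<in> E" by simp
  have "(subst (\<lambda>c. if c = 1 then [2] else [c]) [0,1], subst (\<lambda>c. if c = 1 then [2] else [c]) [1,0]) \<in> E"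
    by (rule E_subst[OF E C])
  then have "([0,2], [2,0]) \<in> E" by (simp add: subst_def)
  then have "([0,1,0] @ [0,2] @ [], [0,1,0] @ [2,0] @ []) \<in> E" by (rule E_ctx[OF E])
  then have "([0,1,0,0,2], [0,1,0,2,0]) \<in> E" by simp
  then show ?thesis using s1 E_trans[OF E] by blast
qed

lemma caseB:
  assumes E: "equational_theory E" and H: "([0, 1, 0], [0, 1, 0, 0]) \<in> E"
    and C: "(replicate m 0 @ [1], replicate i 0 @ [1] @ replicate j 0) \<in> E"
    and m: "m \<ge> 2" and j: "j \<ge> 1" and ij: "i + j \<ge> 2"
  shows "([0, 1, 0, 2], [0, 1, 0, 2, 0]) \<in> E"
proof -
  let ?s = "\<lambda>c. if c = 1 then [2] else [c::nat]"
  have "(subst ?s (replicate m 0 @ [1]), subst ?s (replicate i 0 @ [1] @ replicate j 0)) \<in> E"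
    by (rule E_subst[OF E C])
  then have "(replicate m 0 @ [2], replicate i 0 @ [2] @ replicate j 0) \<in> E"
    by (simp add: subst_def concat_rep)
  then have "([0,1] @ (replicate m 0 @ [2]) @ [], [0,1] @ (replicate i 0 @ [2] @ replicate j 0) @ []) \<in> E"
    by (rule E_ctx[OF E])
  then have R: "([0,1] @ replicate m 0 @ [2], [0,1] @ replicate i 0 @ [2] @ replicate j 0) \<in> E"
    by simp
  obtain m' where m': "m = Suc m'" using m by (cases m) auto
  obtain j' where j': "j = Suc j'" using j by (cases j) auto
  have "([] @ ([0] @ [1] @ [0]) @ [2], [] @ ([0] @ [1] @ replicate (Suc m') 0) @ [2]) \<in> E"
    by (rule E_ctx[OF E xtxn[OF E H]])
  then have L: "([0,1,0,2], [0,1] @ replicate m 0 @ [2]) \<in> E" using m' by simp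
  have L2: "([0,1,0,2], [0,1] @ replicate i 0 @ [2] @ replicate j 0) \<in> E"
    using L R E_trans[OF E] by blast
  show ?thesis
  proof (cases i)
    case (Suc i')
    have "([] @ ([0] @ [1] @ [0]) @ [2] @ replicate j 0, [] @ ([0] @ [1] @ replicate (Suc i') 0) @ [2] @ replicate j 0) \<in> E"
      by (rule E_ctx[OF E xtxn[OF E H]])
    then have a: "([0,1,0,2] @ replicate j 0, [0,1] @ replicate i 0 @ [2] @ replicate j 0) \<in> E"
      using Suc by simp
    have "([0] @ [1,0,2] @ [0], [0] @ [1,0,2] @ replicate j 0) \<in> E"
      using xtxn[OF E H, of "[1,0,2]" j'] j' by simp
    then have b: "([0,1,0,2,0], [0,1,0,2] @ replicate j 0) \<in> E" by simp
    show ?thesis using L2 a b E_trans[OF E] E_sym[OF E] by meson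
  next
    case 0
    then have jj: "j \<ge> 2" using ij by simp
    have "([0] @ [1,2] @ [0], [0] @ [1,2] @ replicate j 0) \<in> E"
      using xtxn[OF E H, of "[1,2]" j'] j' by simp
    then have "([0,1,2,0], [0,1] @ replicate i 0 @ [2] @ replicate j 0) \<in> E" using 0 by simp
    then have Q: "([0,1,0,2], [0,1,2,0]) \<in> E" using L2 E_trans[OF E] E_sym[OF E] by meson
    have "([] @ [0,1,0,2] @ [0], [] @ [0,1,2,0] @ [0]) \<in> E" by (rule E_ctx[OF E Q])
    then have q1: "([0,1,0,2,0], [0,1,2,0,0]) \<in> E" by simp
    have "([0] @ [1,2] @ [0], [0] @ [1,2] @ replicate 2 0) \<in> E"
      using xtxn[OF E H, of "[1,2]" 1] by (simp add: numeral_2_eq_2)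
    then have q2: "([0,1,2,0], [0,1,2,0,0]) \<in> E" by (simp add: numeral_2_eq_2)
    show ?thesis using Q q1 q2 E_trans[OF E] E_sym[OF E] by meson
  qed
qed

text \<open>Letters: x = 0, t = 1, s = 2; a = 0 in a^+t (represented by aat).\<close>
theorem lemma4p1:
  fixes E :: "(word \<times> word) set"
  assumes "equational_theory E"
    and "isoterm E [1]"
    and "([0, 1, 0], [0, 1, 0, 0]) \<in> E"
    and "\<not> Mg_in_variety {[0, 0, 1]} E"
  shows "([0, 1, 0, 2], [0, 1, 0, 2, 0]) \<in> E"
proof -
  note E = assms(1) and iso = assms(2) and H = assms(3)
  obtain U W where UW: "(U, W) \<in> E" and gU: "gle U [0,0,1]" and ng: "\<not> gamma U W"
    using reduce[OF E assms(4)] by blast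
  have cnt: "\<And>P. length (filter P U) \<le> 1 \<or> length (filter P W) \<le> 1 \<Longrightarrow>
     length (filter P U) = length (filter P W)"
    using iso_cnt2[OF E iso cnt_E[OF E UW]] by blast
  let ?O = "\<lambda>c::nat. c \<noteq> 0 \<and> c \<noteq> 1"
  from gle_form[OF gU] show ?thesis
  proof
    assume "\<exists>m. U = replicate m 0"
    then obtain m where U: "U = replicate m 0" by blast
    have "length (filter (\<lambda>c. c \<noteq> 0) U) = length (filter (\<lambda>c. c \<noteq> 0) W)"
      by (rule cnt) (simp add: U)
    then have "length (filter (\<lambda>c. c \<noteq> 0) W) = 0" by (simp add: U)
    then have "set W \<subseteq> {0}" by (auto simp: filter_empty_conv)
    then have W1: "W = replicate (length W) 0" by (rule rep_all)
    obtain n where W: "W = replicate n 0" by (rule that[OF W1])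
    have cc: "length (filter (\<lambda>c. c = 0) U) = m" "length (filter (\<lambda>c. c = 0) W) = n"
      using U W by (simp_all add: filter_replicate)
    show ?thesis
    proof (cases "m \<le> 1 \<or> n \<le> 1")
      case True
      then have "m = n" using cnt[of "\<lambda>c. c = 0"] cc by auto
      then have "U = W" using U W by simp
      then show ?thesis using ng gamma_refl by blast
    next
      case False
      then have "gamma (replicate m 0 @ []) (replicate n 0 @ [])"
        by (intro gamma_rep) auto
      then show ?thesis using ng U W by simp
    qed
  next
    assume "\<exists>m. U = replicate m 0 @ [1]"
    then obtain m where U: "U = replicate m 0 @ [1]" by blast
    have "length (filter ?O U) = length (filter ?O W)"
      by (rule cnt) (simp add: U)
    then have "length (filter ?O W) = 0" by (simp add: U)
    then have sW: "set W \<subseteq> {0,1}" by (auto simp: filter_empty_conv)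
    have "length (filter ((=) 1) U) = length (filter ((=) 1) W)"
      by (rule cnt) (simp add: U)
    then have "count_list W 1 = Suc 0" by (simp add: U count_list_eq_length_filter)
    then obtain pref rest where W0: "W = pref @ 1 # rest" "1 \<notin> set pref" "count_list rest 1 = 0"
      using count_list_Suc_split_first by metis
    have r1: "1 \<notin> set rest" using W0(3) by (simp add: count_list_0_iff)
    have "set pref \<subseteq> {0,1}" "set rest \<subseteq> {0,1}" using sW unfolding W0(1) by auto
    then have "set rest \<subseteq> {0}" "set pref \<subseteq> {0}" using r1 W0(2) by blast+
    then have p2: "rest = replicate (length rest) 0" and p1: "pref = replicate (length pref) 0"
      by (simp_all only: rep_all)
    obtain i j where pr: "pref = replicate i 0" "rest = replicate j 0"
      by (rule that[OF p1 p2])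
    have W: "W = replicate i 0 @ [1] @ replicate j 0" using W0(1) pr by simp
    have c0: "length (filter ((=) 0) U) = m" "length (filter ((=) 0) W) = i + j"
      using U W by (simp_all add: filter_replicate)
    show ?thesis
    proof (cases "m \<le> 1 \<or> i + j \<le> 1")
      case True
      then have mij: "m = i + j" using cnt[of "(=) 0"] c0 by auto
      show ?thesis
      proof (cases "j = 0")
        case True
        then have "U = W" using U W mij by simp
        then show ?thesis using ng gamma_refl by blast
      next
        case False
        have "m \<le> 1" using True mij by auto
        then have "m = 1" "i = 0" "j = 1" using mij False by auto
        then have "([0, 1], [1, 0]) \<in> E" using UW U W by simp
        then show ?thesis by (rule caseA[OF E H])
      qed
    next
      case False
      show ?thesis
      proof (cases "j = 0")
        case True
        then have "gamma (replicate m 0 @ [1]) (replicate i 0 @ [1])"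
          using False by (intro gamma_rep) auto
        then show ?thesis using ng U W True by simp
      next
        case j0: False
        have "(replicate m 0 @ [1], replicate i 0 @ [1] @ replicate j 0) \<in> E" using UW U W by simp
        then show ?thesis by (rule caseB[OF E H]) (use False j0 in auto)
      qed
    qed
  qed
qed

end
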